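(* Let $\mathcal{L}$ be a $C^2$ function, positively scale-invariant in $\boldsymbol{W}$, bounded below with $\mathcal{L}^*=\inf\mathcal{L}$, satisfying the normalized smoothness assumption (A$_V$) with constants $L^{\boldsymbol{v}\boldsymbol{v}}_{ij},L^{\boldsymbol{v}\boldsymbol{g}}_i,L^{\boldsymbol{g}\boldsymbol{g}}$. Let $(\boldsymbol{W}_t,\boldsymbol{g}_t)$ be the iterates of PSI-GD with step sizes $\eta_i=1/\tilde{L}_{\boldsymbol{v}^{(i)}}$ and $\eta_{\boldsymbol{g}}=1/\tilde{L}_{\boldsymbol{g}}$, and $\boldsymbol{V}_t$ the normalization of $\boldsymbol{W}_t$. Then for every $T\ge1$, $$\min_{0\le t<T}\big\|\nabla_{\boldsymbol{V},\boldsymbol{g}}\mathcal{L}(\boldsymbol{V}_t,\boldsymbol{g}_t)\big\|^2\le\frac{2\tilde{L}\,(\mathcal{L}(\boldsymbol{W}_0,\boldsymbol{g}_0)-\mathcal{L}^* )}{T},$$ where $\tilde{L}=\max\{\tilde{L}_{\boldsymbol{v}^{(1)}},\dots,\tilde{L}_{\boldsymbol{v}^{(m)}},\tilde{L}_{\boldsymbol{g}}\}$.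
   Context: Parameters $(\boldsymbol{W},\boldsymbol{g})$, $\boldsymbol{W}=(\boldsymbol{w}^{(1)},\dots,\boldsymbol{w}^{(m)})$, $\boldsymbol{w}^{(i)}\in\mathbb{R}^{d_i}\setminus\{0\}$, $\boldsymbol{g}\in\mathbb{R}^p$; $\mathcal{L}$ is PSI in $\boldsymbol{W}$: $\mathcal{L}((a_1\boldsymbol{w}^{(1)},\dots,a_m\boldsymbol{w}^{(m)}),\boldsymbol{g})=\mathcal{L}(\boldsymbol{W},\boldsymbol{g})$ for all $a_i>0$. The normalization of $\boldsymbol{W}$ is $\boldsymbol{V}=(\boldsymbol{w}^{(1)}/\|\boldsymbol{w}^{(1)}\|,\dots,\boldsymbol{w}^{(m)}/\|\boldsymbol{w}^{(m)}\|)$; $\nabla_{\boldsymbol{V},\boldsymbol{g}}\mathcal{L}(\boldsymbol{V},\boldsymbol{g})$ denotes the full gradient of $\mathcal{L}$ (as a function of $(\boldsymbol{W},\boldsymbol{g})$) evaluated at the point $(\boldsymbol{V},\boldsymbol{g})$, and Hessian blocks $\nabla^2_{\boldsymbol{v}^{(i)}\boldsymbol{v}^{(j)}}\mathcal{L}$ etc. are the corresponding blocks of the Hessian of $\mathcal{L}$ evaluated at $(\boldsymbol{V},\boldsymbol{g})$. Assumption (A$_V$): for all $(\boldsymbol{V},\boldsymbol{g})$ with every block of $\boldsymbol{V}$ a unit vector, $\|\nabla^2_{\boldsymbol{v}^{(i)}\boldsymbol{v}^{(j)}}\mathcal{L}(\boldsymbol{V},\boldsymbol{g})\|_2\le L^{\boldsymbol{v}\boldsymbol{v}}_{ij}$,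 $\|\nabla^2_{\boldsymbol{v}^{(i)}\boldsymbol{g}}\mathcal{L}(\boldsymbol{V},\boldsymbol{g})\|_2\le L^{\boldsymbol{v}\boldsymbol{g}}_{i}$, $\|\nabla^2_{\boldsymbol{g}\boldsymbol{g}}\mathcal{L}(\boldsymbol{V},\boldsymbol{g})\|_2\le L^{\boldsymbol{g}\boldsymbol{g}}$ (spectral norms). Set $\tilde{L}_{\boldsymbol{v}^{(i)}}=L^{\boldsymbol{v}\boldsymbol{g}}_i+\sum_{j=1}^mL^{\boldsymbol{v}\boldsymbol{v}}_{ij}$ and $\tilde{L}_{\boldsymbol{g}}=mL^{\boldsymbol{g}\boldsymbol{g}}+\sum_{i=1}^mL^{\boldsymbol{v}\boldsymbol{g}}_i$ (assumed positive). PSI-GD: $\boldsymbol{w}^{(i)}_{t+1}=\boldsymbol{w}^{(i)}_t-\eta_i\|\boldsymbol{w}^{(i)}_t\|^2\nabla_{\boldsymbol{w}^{(i)}}\mathcal{L}(\boldsymbol{W}_t,\boldsymbol{g}_t)$ for each $i$, and $\boldsymbol{g}_{t+1}=\boldsymbol{g}_t-\eta_{\boldsymbol{g}}\nabla_{\boldsymbol{g}}\mathcal{L}(\boldsymbol{W}_t,\boldsymbol{g}_t)$. *)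

theory Defs
  imports "HOL-Analysis.Analysis"
begin

text \<open>The block parameter W = (w^(1),...,w^(m)) is a vector x :: real^'k whose coordinates
  are partitioned into the m blocks by blk :: 'k => nat (block i = {j. blk j = i}, i < m).\<close>

definition blockproj :: "('k::finite \<Rightarrow> nat) \<Rightarrow> nat \<Rightarrow> real^'k \<Rightarrow> real^'k" where
  "blockproj blk i x = (\<chi> j. if blk j = i then x $ j else 0)"

definition PW :: "('k::finite \<Rightarrow> nat) \<Rightarrow> nat \<Rightarrow> (real^'k) \<times> (real^'p::finite) \<Rightarrow> (real^'k) \<times> (real^'p)" where
  "PW blk i z = (blockproj blk i (fst z), 0)"

definition PG :: "(real^'k::finite) \<times> (real^'p::finite) \<Rightarrow> (real^'k) \<times> (real^'p)" where
  "PG z = (0, snd z)"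

text \<open>parameters with every block nonzero (the domain of L)\<close>
definition dom_nz :: "('k::finite \<Rightarrow> nat) \<Rightarrow> nat \<Rightarrow> ((real^'k) \<times> (real^'p)) set" where
  "dom_nz blk m = {z. \<forall>i<m. blockproj blk i (fst z) \<noteq> 0}"

definition scale_blocks :: "('k::finite \<Rightarrow> nat) \<Rightarrow> (nat \<Rightarrow> real) \<Rightarrow> real^'k \<Rightarrow> real^'k" where
  "scale_blocks blk a x = (\<chi> j. a (blk j) * x $ j)"

definition PSI :: "('k::finite \<Rightarrow> nat) \<Rightarrow> nat \<Rightarrow> ((real^'k) \<times> (real^'p::finite) \<Rightarrow> real) \<Rightarrow> bool" where
  "PSI blk m L \<longleftrightarrow> (\<forall>a x g. (\<forall>i<m. a i > 0) \<longrightarrow> (x, g) \<in> dom_nz blk m \<longrightarrow>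
      L (scale_blocks blk a x, g) = L (x, g))"

definition normalize_blocks :: "('k::finite \<Rightarrow> nat) \<Rightarrow> real^'k \<Rightarrow> real^'k" where
  "normalize_blocks blk x = (\<chi> j. x $ j / norm (blockproj blk (blk j) x))"

definition unit_blocks :: "('k::finite \<Rightarrow> nat) \<Rightarrow> nat \<Rightarrow> real^'k \<Rightarrow> bool" where
  "unit_blocks blk m x \<longleftrightarrow> (\<forall>i<m. norm (blockproj blk i x) = 1)"

definition Ltil_v :: "nat \<Rightarrow> (nat \<Rightarrow> nat \<Rightarrow> real) \<Rightarrow> (nat \<Rightarrow> real) \<Rightarrow> nat \<Rightarrow> real" where
  "Ltil_v m Lvv Lvg i = Lvg i + (\<Sum>j<m. Lvv i j)"

definition Ltil_g :: "nat \<Rightarrow> (nat \<Rightarrow> real) \<Rightarrow> real \<Rightarrow> real" where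
  "Ltil_g m Lvg Lgg = real m * Lgg + (\<Sum>i<m. Lvg i)"

definition Ltil_max :: "nat \<Rightarrow> (nat \<Rightarrow> nat \<Rightarrow> real) \<Rightarrow> (nat \<Rightarrow> real) \<Rightarrow> real \<Rightarrow> real" where
  "Ltil_max m Lvv Lvg Lgg = Max (insert (Ltil_g m Lvg Lgg) (Ltil_v m Lvv Lvg ` {..<m}))"

end

theory Submission
  imports Defs
begin

lemma deriv_line:
  fixes L :: "'a::real_inner \<Rightarrow> real" and G :: "'a \<Rightarrow> 'a"
  assumes "(L has_derivative (\<lambda>h. G (z + s *\<^sub>R d) \<bullet> h)) (at (z + s *\<^sub>R d))"
  shows "((\<lambda>s. L (z + s *\<^sub>R d)) has_real_derivative (G (z + s *\<^sub>R d) \<bullet> d)) (at s)"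
proof -
  have l: "((\<lambda>s. z + s *\<^sub>R d) has_derivative (\<lambda>h. h *\<^sub>R d)) (at s)"
    by (auto intro!: derivative_eq_intros)
  show ?thesis
    apply (rule has_derivative_imp_has_field_derivative[OF has_derivative_compose[OF l assms]])
    by (simp add: inner_scaleR_right)
qed

lemma deriv_line2:
  fixes G :: "'a::real_inner \<Rightarrow> 'a" and H :: "'a \<Rightarrow> 'a \<Rightarrow>\<^sub>L 'a"
  assumes "(G has_derivative blinfun_apply (H (z + s *\<^sub>R d))) (at (z + s *\<^sub>R d))"
  shows "((\<lambda>s. G (z + s *\<^sub>R d) \<bullet> u) has_real_derivative (H (z + s *\<^sub>R d) d \<bullet> u)) (at s)"
proof -
  have l: "((\<lambda>s. z + s *\<^sub>R d) has_derivative (\<lambda>h. h *\<^sub>R d)) (at s)"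
    by (auto intro!: derivative_eq_intros)
  have c: "((\<lambda>s. G (z + s *\<^sub>R d)) has_derivative (\<lambda>h. H (z + s *\<^sub>R d) (h *\<^sub>R d))) (at s)"
    by (rule has_derivative_compose[OF l assms])
  show ?thesis
    apply (rule has_derivative_imp_has_field_derivative[OF has_derivative_inner_left[OF c]])
    by (simp add: blinfun.scaleR_right)
qed

lemma descent:
  fixes L :: "'a::real_inner \<Rightarrow> real" and G :: "'a \<Rightarrow> 'a" and H :: "'a \<Rightarrow> 'a \<Rightarrow>\<^sub>L 'a"
  assumes grad: "\<forall>z\<in>S. (L has_derivative (\<lambda>h. G z \<bullet> h)) (at z)"
  and hess: "\<forall>z\<in>S. (G has_derivative blinfun_apply (H z)) (at z)"
  and seg: "\<forall>s. 0 \<le> s \<and> s \<le> 1 \<longrightarrow> z + s *\<^sub>R d \<in> S"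
  and M: "\<forall>s. 0 \<le> s \<and> s \<le> 1 \<longrightarrow> d \<bullet> H (z + s *\<^sub>R d) d \<le> M"
  shows "L (z + d) \<le> L z + G z \<bullet> d + M/2"
proof -
  have f1: "((\<lambda>s. L (z + s *\<^sub>R d)) has_real_derivative (G (z + s *\<^sub>R d) \<bullet> d)) (at s)"
    if "0 \<le> s" "s \<le> 1" for s
    using deriv_line grad seg that by blast
  have f2: "((\<lambda>s. G (z + s *\<^sub>R d) \<bullet> d) has_real_derivative (H (z + s *\<^sub>R d) d \<bullet> d)) (at s)"
    if "0 \<le> s" "s \<le> 1" for s
    using deriv_line2 hess seg that by blast
  have g: "G (z + s *\<^sub>R d) \<bullet> d - G z \<bullet> d \<le> s * M" if "0 \<le> s" "s \<le> 1" for s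
  proof (cases "s = 0")
    case True then show ?thesis by simp
  next
    case False
    then have "0 < s" using that by simp
    from MVT2[OF this, of "\<lambda>s. G (z + s *\<^sub>R d) \<bullet> d" "\<lambda>s. H (z + s *\<^sub>R d) d \<bullet> d"] f2 that
    obtain \<sigma> where s: "0 < \<sigma>" "\<sigma> < s" and e: "G (z + s *\<^sub>R d) \<bullet> d - G z \<bullet> d = s * (H (z + \<sigma> *\<^sub>R d) d \<bullet> d)"
      by auto
    have "H (z + \<sigma> *\<^sub>R d) d \<bullet> d \<le> M" using M s that by (simp add: inner_commute)
    then show ?thesis using e \<open>0 < s\<close> by (simp add: mult_left_mono)
  qed
  define \<phi> where "\<phi> s = L (z + s *\<^sub>R d) - s * (G z \<bullet> d) - M * s\<^sup>2 / 2" for s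
  have d\<phi>: "(\<phi> has_real_derivative (G (z + s *\<^sub>R d) \<bullet> d - G z \<bullet> d - M * s)) (at s)"
    if "0 \<le> s" "s \<le> 1" for s
    unfolding \<phi>_def
    by (rule derivative_eq_intros f1[OF that] | simp)+
  from MVT2[of 0 1 \<phi>, OF _ d\<phi>] obtain \<sigma> where s: "0 < \<sigma>" "\<sigma> < 1"
    and e: "\<phi> 1 - \<phi> 0 = (1 - 0) * (G (z + \<sigma> *\<^sub>R d) \<bullet> d - G z \<bullet> d - M * \<sigma>)"
    by auto
  have "\<phi> 1 - \<phi> 0 \<le> 0" using e g[of \<sigma>] s by (simp add: mult.commute)
  then show ?thesis unfolding \<phi>_def by simp
qed

lemma mixed:
  fixes L :: "'a::real_inner \<Rightarrow> real" and G :: "'a \<Rightarrow> 'a" and H :: "'a \<Rightarrow> 'a \<Rightarrow>\<^sub>L 'a"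
  assumes grad: "\<forall>z\<in>S. (L has_derivative (\<lambda>h. G z \<bullet> h)) (at z)"
  and hess: "\<forall>z\<in>S. (G has_derivative blinfun_apply (H z)) (at z)"
  and seg: "\<forall>s t. 0 \<le> s \<and> s \<le> \<epsilon> \<and> 0 \<le> t \<and> t \<le> \<epsilon> \<longrightarrow> w + s *\<^sub>R u + t *\<^sub>R v \<in> S"
  and ep: "\<epsilon> > 0"
  shows "\<exists>s t. 0 \<le> s \<and> s \<le> \<epsilon> \<and> 0 \<le> t \<and> t \<le> \<epsilon> \<and>
    L (w + \<epsilon> *\<^sub>R u + \<epsilon> *\<^sub>R v) - L (w + \<epsilon> *\<^sub>R u) - L (w + \<epsilon> *\<^sub>R v) + L w
     = \<epsilon>\<^sup>2 * (H (w + s *\<^sub>R u + t *\<^sub>R v) v \<bullet> u)"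
proof -
  define p where "p s = L ((w + \<epsilon> *\<^sub>R v) + s *\<^sub>R u) - L (w + s *\<^sub>R u)" for s
  have S1: "(w + \<epsilon> *\<^sub>R v) + s *\<^sub>R u \<in> S" if "0 \<le> s" "s \<le> \<epsilon>" for s
    using seg[rule_format, of s \<epsilon>] that ep by (simp add: algebra_simps)
  have S2: "w + s *\<^sub>R u \<in> S" if "0 \<le> s" "s \<le> \<epsilon>" for s
    using seg[rule_format, of s 0] that ep by (simp add: algebra_simps)
  have dp: "(p has_real_derivative (G ((w + \<epsilon> *\<^sub>R v) + s *\<^sub>R u) \<bullet> u - G (w + s *\<^sub>R u) \<bullet> u)) (at s)"
    if "0 \<le> s" "s \<le> \<epsilon>" for s
    unfolding p_def
    by (rule DERIV_diff deriv_line grad[rule_format] S1 S2 that)+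
  from MVT2[OF ep dp] obtain \<sigma> where s: "0 < \<sigma>" "\<sigma> < \<epsilon>"
    and e1: "p \<epsilon> - p 0 = (\<epsilon> - 0) * (G ((w + \<epsilon> *\<^sub>R v) + \<sigma> *\<^sub>R u) \<bullet> u - G (w + \<sigma> *\<^sub>R u) \<bullet> u)"
    by auto
  define q where "q t = G ((w + \<sigma> *\<^sub>R u) + t *\<^sub>R v) \<bullet> u" for t
  have S3: "(w + \<sigma> *\<^sub>R u) + t *\<^sub>R v \<in> S" if "0 \<le> t" "t \<le> \<epsilon>" for t
    using seg[rule_format, of \<sigma> t] that s by (simp add: algebra_simps)
  have dq: "(q has_real_derivative (H ((w + \<sigma> *\<^sub>R u) + t *\<^sub>R v) v \<bullet> u)) (at t)"
    if "0 \<le> t" "t \<le> \<epsilon>" for t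
    unfolding q_def
    by (rule deriv_line2 hess[rule_format] S3 that)+
  from MVT2[OF ep dq] obtain \<tau> where t: "0 < \<tau>" "\<tau> < \<epsilon>"
    and e2: "q \<epsilon> - q 0 = (\<epsilon> - 0) * (H ((w + \<sigma> *\<^sub>R u) + \<tau> *\<^sub>R v) v \<bullet> u)"
    by auto
  have qq: "G ((w + \<epsilon> *\<^sub>R v) + \<sigma> *\<^sub>R u) \<bullet> u - G (w + \<sigma> *\<^sub>R u) \<bullet> u
      = \<epsilon> * (H (w + \<sigma> *\<^sub>R u + \<tau> *\<^sub>R v) v \<bullet> u)"
    using e2 unfolding q_def by (simp add: algebra_simps)
  have pp: "L (w + \<epsilon> *\<^sub>R u + \<epsilon> *\<^sub>R v) - L (w + \<epsilon> *\<^sub>R u) - L (w + \<epsilon> *\<^sub>R v) + L w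
     = \<epsilon> * (G ((w + \<epsilon> *\<^sub>R v) + \<sigma> *\<^sub>R u) \<bullet> u - G (w + \<sigma> *\<^sub>R u) \<bullet> u)"
    using e1 unfolding p_def by (simp add: algebra_simps)
  have "L (w + \<epsilon> *\<^sub>R u + \<epsilon> *\<^sub>R v) - L (w + \<epsilon> *\<^sub>R u) - L (w + \<epsilon> *\<^sub>R v) + L w
     = \<epsilon>\<^sup>2 * (H (w + \<sigma> *\<^sub>R u + \<tau> *\<^sub>R v) v \<bullet> u)"
    unfolding pp qq by (simp add: power2_eq_square)
  then show ?thesis using s t by (intro exI[of _ \<sigma>] exI[of _ \<tau>]) auto
qed

lemma eps_zero:
  fixes X :: real
  assumes "\<And>e. e > 0 \<Longrightarrow> \<bar>X\<bar> \<le> e"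
  shows "X = 0"
  using assms[of "\<bar>X\<bar>/2"] by (cases "X = 0") auto

lemma schwarz:
  fixes L :: "'a::real_inner \<Rightarrow> real" and G :: "'a \<Rightarrow> 'a" and H :: "'a \<Rightarrow> 'a \<Rightarrow>\<^sub>L 'a"
  assumes S: "open S"
  and grad: "\<forall>z\<in>S. (L has_derivative (\<lambda>h. G z \<bullet> h)) (at z)"
  and hess: "\<forall>z\<in>S. (G has_derivative blinfun_apply (H z)) (at z)"
  and cont: "continuous_on S H"
  and w: "w \<in> S"
  shows "H w v \<bullet> u = H w u \<bullet> v"
proof -
  have bound: "\<bar>H w v \<bullet> u - H w u \<bullet> v\<bar> \<le> 2 * e * (norm u * norm v)" if e: "e > 0" for e
  proof -
    obtain d1 where d1: "d1 > 0" "ball w d1 \<subseteq> S" using S w open_contains_ball by blast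
    obtain d2 where d2: "d2 > 0" "\<forall>y\<in>S. dist y w < d2 \<longrightarrow> dist (H y) (H w) < e"
      using cont w e unfolding continuous_on_iff by blast
    define \<delta> where "\<delta> = min d1 d2"
    have \<delta>: "\<delta> > 0" "ball w \<delta> \<subseteq> S" "\<forall>y\<in>ball w \<delta>. norm (H y - H w) < e"
      using d1 d2 unfolding \<delta>_def by (auto simp: dist_norm norm_minus_commute subset_iff)
    define \<epsilon> where "\<epsilon> = \<delta> / (2 * (norm u + norm v + 1))"
    have ep: "\<epsilon> > 0" unfolding \<epsilon>_def using \<delta>(1)
      by (intro divide_pos_pos) (auto intro: add_pos_nonneg add_nonneg_pos)
    have inball: "w + s *\<^sub>R u + t *\<^sub>R v \<in> ball w \<delta>"
      if "0 \<le> s" "s \<le> \<epsilon>" "0 \<le> t" "t \<le> \<epsilon>" for s t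
    proof -
      have "norm (s *\<^sub>R u + t *\<^sub>R v) \<le> s * norm u + t * norm v"
        using that norm_triangle_ineq[of "s *\<^sub>R u" "t *\<^sub>R v"] by simp
      also have "\<dots> \<le> \<epsilon> * norm u + \<epsilon> * norm v"
        using that by (intro add_mono mult_right_mono) auto
      also have "\<dots> = \<epsilon> * (norm u + norm v)" by (simp add: algebra_simps)
      also have "\<dots> < \<delta>"
      proof -
        have "\<epsilon> * (norm u + norm v) \<le> \<epsilon> * (2 * (norm u + norm v + 1)) - \<epsilon>"
          using ep by (simp add: algebra_simps)
        also have "\<epsilon> * (2 * (norm u + norm v + 1)) = \<delta>"
        proof -
          have "2 * (norm u + norm v + 1) > 0" by (simp add: add_pos_nonneg add_nonneg_pos)
          then show ?thesis unfolding \<epsilon>_def by simp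
        qed
        finally show ?thesis using ep by simp
      qed
      finally have "norm (s *\<^sub>R u + t *\<^sub>R v) < \<delta>" .
      moreover have "dist w (w + s *\<^sub>R u + t *\<^sub>R v) = norm (s *\<^sub>R u + t *\<^sub>R v)"
        by (simp add: dist_norm norm_minus_commute add.assoc add.commute)
      ultimately show ?thesis by simp
    qed
    have seg1: "\<forall>s t. 0 \<le> s \<and> s \<le> \<epsilon> \<and> 0 \<le> t \<and> t \<le> \<epsilon> \<longrightarrow> w + s *\<^sub>R u + t *\<^sub>R v \<in> S"
      using inball \<delta> by blast
    have seg2: "\<forall>s t. 0 \<le> s \<and> s \<le> \<epsilon> \<and> 0 \<le> t \<and> t \<le> \<epsilon> \<longrightarrow> w + s *\<^sub>R v + t *\<^sub>R u \<in> S"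
    proof (intro allI impI)
      fix s t assume st: "0 \<le> s \<and> s \<le> \<epsilon> \<and> 0 \<le> t \<and> t \<le> \<epsilon>"
      have eqq: "w + s *\<^sub>R v + t *\<^sub>R u = w + t *\<^sub>R u + s *\<^sub>R v" by (simp add: algebra_simps)
      moreover have "w + t *\<^sub>R u + s *\<^sub>R v \<in> ball w \<delta>" using inball[of t s] st by auto
      then show "w + s *\<^sub>R v + t *\<^sub>R u \<in> S" unfolding eqq using \<delta>(2) by (rule subsetD[rotated])
    qed
    obtain s1 t1 where st1: "0 \<le> s1" "s1 \<le> \<epsilon>" "0 \<le> t1" "t1 \<le> \<epsilon>" and E1:
      "L (w + \<epsilon> *\<^sub>R u + \<epsilon> *\<^sub>R v) - L (w + \<epsilon> *\<^sub>R u) - L (w + \<epsilon> *\<^sub>R v) + L w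
       = \<epsilon>\<^sup>2 * (H (w + s1 *\<^sub>R u + t1 *\<^sub>R v) v \<bullet> u)"
      using mixed[OF grad hess seg1 ep] by blast
    obtain s2 t2 where st2: "0 \<le> s2" "s2 \<le> \<epsilon>" "0 \<le> t2" "t2 \<le> \<epsilon>" and E2:
      "L (w + \<epsilon> *\<^sub>R v + \<epsilon> *\<^sub>R u) - L (w + \<epsilon> *\<^sub>R v) - L (w + \<epsilon> *\<^sub>R u) + L w
       = \<epsilon>\<^sup>2 * (H (w + s2 *\<^sub>R v + t2 *\<^sub>R u) u \<bullet> v)"
      using mixed[OF grad hess seg2 ep] by blast
    define y1 where "y1 = w + s1 *\<^sub>R u + t1 *\<^sub>R v"
    define y2 where "y2 = w + t2 *\<^sub>R u + s2 *\<^sub>R v"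
    have y1: "norm (H y1 - H w) < e" using inball[OF st1] \<delta> unfolding y1_def by blast
    have y2: "norm (H y2 - H w) < e" using inball[OF st2(3,4,1,2)] \<delta> unfolding y2_def by blast
    have "\<epsilon>\<^sup>2 * (H y1 v \<bullet> u) = \<epsilon>\<^sup>2 * (H y2 u \<bullet> v)"
      using E1 E2 unfolding y1_def y2_def by (simp add: algebra_simps)
    then have eq: "H y1 v \<bullet> u = H y2 u \<bullet> v" using ep by simp
    have b1: "\<bar>H y1 v \<bullet> u - H w v \<bullet> u\<bar> \<le> e * (norm u * norm v)"
    proof -
      have "\<bar>H y1 v \<bullet> u - H w v \<bullet> u\<bar> = \<bar>(H y1 - H w) v \<bullet> u\<bar>"
        by (simp add: blinfun.diff_left inner_diff_left)
      also have "\<dots> \<le> norm ((H y1 - H w) v) * norm u" by (rule Cauchy_Schwarz_ineq2)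
      also have "\<dots> \<le> (norm (H y1 - H w) * norm v) * norm u"
        by (intro mult_right_mono norm_blinfun) auto
      also have "\<dots> \<le> (e * norm v) * norm u"
        using y1 by (intro mult_right_mono) auto
      finally show ?thesis by (simp add: algebra_simps)
    qed
    have b2: "\<bar>H y2 u \<bullet> v - H w u \<bullet> v\<bar> \<le> e * (norm u * norm v)"
    proof -
      have "\<bar>H y2 u \<bullet> v - H w u \<bullet> v\<bar> = \<bar>(H y2 - H w) u \<bullet> v\<bar>"
        by (simp add: blinfun.diff_left inner_diff_left)
      also have "\<dots> \<le> norm ((H y2 - H w) u) * norm v" by (rule Cauchy_Schwarz_ineq2)
      also have "\<dots> \<le> (norm (H y2 - H w) * norm u) * norm v"
        by (intro mult_right_mono norm_blinfun) auto
      also have "\<dots> \<le> (e * norm u) * norm v"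
        using y2 by (intro mult_right_mono) auto
      finally show ?thesis by (simp add: algebra_simps)
    qed
    show ?thesis using b1 b2 eq by linarith
  qed
  have "H w v \<bullet> u - H w u \<bullet> v = 0"
  proof (rule eps_zero)
    fix e :: real assume e: "e > 0"
    define e' where "e' = e / (2 * (norm u * norm v) + 1)"
    have e': "e' > 0" unfolding e'_def using e by (simp add: add_nonneg_pos)
    have "2 * e' * (norm u * norm v) \<le> e"
    proof -
      have "2 * e' * (norm u * norm v) \<le> e' * (2 * (norm u * norm v) + 1)" using e' by simp
      also have "\<dots> = e"
      proof -
        have "2 * (norm u * norm v) + 1 > 0" by (simp add: add_nonneg_pos)
        then show ?thesis unfolding e'_def by simp
      qed
      finally show ?thesis .
    qed
    then show "\<bar>H w v \<bullet> u - H w u \<bullet> v\<bar> \<le> e" using bound[OF e'] by linarith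
  qed
  then show ?thesis by simp
qed

lemma bp_nth[simp]: "blockproj blk i x $ j = (if blk j = i then x $ j else 0)"
  by (simp add: blockproj_def)

lemma bp_add: "blockproj blk i (x + y) = blockproj blk i x + blockproj blk i y"
  by (simp add: vec_eq_iff)
lemma bp_scaleR: "blockproj blk i (c *\<^sub>R x) = c *\<^sub>R blockproj blk i x"
  by (simp add: vec_eq_iff)
lemma bp_idem[simp]: "blockproj blk i (blockproj blk i x) = blockproj blk i x"
  by (simp add: vec_eq_iff)
lemma bp_inner_left: "blockproj blk i x \<bullet> y = blockproj blk i x \<bullet> blockproj blk i y"
  unfolding inner_vec_def by (rule sum.cong) auto
lemma bp_inner_right: "x \<bullet> blockproj blk i y = blockproj blk i x \<bullet> blockproj blk i y"
  unfolding inner_vec_def by (rule sum.cong) auto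

lemma bp_scale: "blockproj blk i (scale_blocks blk a x) = a i *\<^sub>R blockproj blk i x"
  by (simp add: vec_eq_iff scale_blocks_def)

lemma scale_nth[simp]: "scale_blocks blk a x $ j = a (blk j) * x $ j"
  by (simp add: scale_blocks_def)

lemma sum_bp:
  assumes "\<forall>j. blk j < m"
  shows "(\<Sum>i<m. blockproj blk i x) = x"
proof -
  have "(\<Sum>i<m. blockproj blk i x) $ j = x $ j" for j
  proof -
    have "(\<Sum>i<m. blockproj blk i x) $ j = (\<Sum>i<m. if blk j = i then x $ j else 0)"
      by (simp add: sum_component)
    also have "\<dots> = x $ j" using assms by (simp add: sum.delta')
    finally show ?thesis .
  qed
  then show ?thesis by (simp add: vec_eq_iff)
qed

lemma inner_split:
  assumes "\<forall>j. blk j < m"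
  shows "x \<bullet> y = (\<Sum>i<m. blockproj blk i x \<bullet> blockproj blk i y)"
proof -
  have "x \<bullet> y = (\<Sum>i<m. blockproj blk i x) \<bullet> y" using sum_bp[OF assms] by simp
  also have "\<dots> = (\<Sum>i<m. blockproj blk i x \<bullet> y)" by (simp add: inner_sum_left)
  also have "\<dots> = (\<Sum>i<m. blockproj blk i x \<bullet> blockproj blk i y)"
    by (rule sum.cong[OF refl], rule bp_inner_left)
  finally show ?thesis .
qed

lemma scale_scale: "scale_blocks blk a (scale_blocks blk b x) = scale_blocks blk (\<lambda>i. a i * b i) x"
  by (simp add: vec_eq_iff)

lemma scale_inv:
  assumes "\<forall>j. blk j < m" "\<forall>i<m. a i \<noteq> 0"
  shows "scale_blocks blk (\<lambda>i. 1 / a i) (scale_blocks blk a x) = x"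
    "scale_blocks blk a (scale_blocks blk (\<lambda>i. 1 / a i) x) = x"
  using assms by (auto simp: vec_eq_iff)

lemma scale_inner: "scale_blocks blk a x \<bullet> y = x \<bullet> scale_blocks blk a y"
  by (simp add: inner_vec_def mult.assoc mult.left_commute)

lemma linear_scale: "linear (scale_blocks blk a)"
  by (rule linearI) (simp_all add: vec_eq_iff algebra_simps)

lemma linear_bp: "linear (blockproj blk i)"
  by (rule linearI) (simp_all add: bp_add bp_scaleR)

definition sc :: "('k::finite \<Rightarrow> nat) \<Rightarrow> (nat \<Rightarrow> real) \<Rightarrow> (real^'k) \<times> (real^'p::finite) \<Rightarrow> (real^'k) \<times> (real^'p)" where
  "sc blk a z = (scale_blocks blk a (fst z), snd z)"

lemma linear_sc: "linear (sc blk a)"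
  unfolding sc_def
  by (rule linearI) (auto simp: linear_add[OF linear_scale] linear_scale[THEN linear_cmul])

lemma bl_sc: "bounded_linear (sc blk a)"
  by (rule linear_conv_bounded_linear[THEN iffD1, OF linear_sc])

lemma linear_PW: "linear (PW blk i)"
  unfolding PW_def
  by (rule linearI) (auto simp: bp_add bp_scaleR)

lemma bl_PW: "bounded_linear (PW blk i)"
  by (rule linear_conv_bounded_linear[THEN iffD1, OF linear_PW])

lemma linear_PG: "linear PG"
  unfolding PG_def by (rule linearI) auto

lemma bl_PG: "bounded_linear PG"
  by (rule linear_conv_bounded_linear[THEN iffD1, OF linear_PG])

lemma PW_idem[simp]: "PW blk i (PW blk i z) = PW blk i z"
  by (simp add: PW_def)
lemma PG_idem[simp]: "PG (PG z) = PG z"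
  by (simp add: PG_def)
lemma PW_inner_left: "PW blk i u \<bullet> v = PW blk i u \<bullet> PW blk i v"
  unfolding PW_def inner_prod_def by (simp add: bp_inner_left[of blk i "fst u" "fst v"])
lemma PG_inner_left: "PG u \<bullet> v = PG u \<bullet> PG v"
  by (cases u, cases v) (simp add: PG_def)
lemma PW_sc: "PW blk i (sc blk a z) = a i *\<^sub>R PW blk i z"
  by (simp add: PW_def sc_def bp_scale)
lemma PG_sc: "PG (sc blk a z) = PG z"
  by (simp add: PG_def sc_def)
lemma sc_inner: "sc blk a u \<bullet> v = u \<bullet> sc blk a v"
  by (simp add: sc_def inner_prod_def scale_inner)
lemma sc_inv:
  assumes "\<forall>j. blk j < m" "\<forall>i<m. a i \<noteq> 0"
  shows "sc blk (\<lambda>i. 1 / a i) (sc blk a z) = z" "sc blk a (sc blk (\<lambda>i. 1 / a i) z) = z"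
  using scale_inv[OF assms] by (auto simp: sc_def)

lemma sum_PW:
  assumes "\<forall>j. blk j < m"
  shows "(\<Sum>i<m. PW blk i z) + PG z = z"
proof -
  have "fst (\<Sum>i<m. PW blk i z) = (\<Sum>i<m. blockproj blk i (fst z))"
    by (simp add: fst_sum PW_def)
  moreover have "snd (\<Sum>i<m. PW blk i z) = 0"
    by (simp add: snd_sum PW_def)
  ultimately show ?thesis
    using sum_bp[OF assms, of "fst z"] by (simp add: PG_def prod_eq_iff)
qed

lemma inner_split2:
  assumes "\<forall>j. blk j < m"
  shows "u \<bullet> v = (\<Sum>i<m. PW blk i u \<bullet> PW blk i v) + PG u \<bullet> PG v"
  using inner_split[OF assms, of "fst u" "fst v"]
  by (simp add: PW_def PG_def inner_prod_def)

lemma norm2_split: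
  assumes "\<forall>j. blk j < m"
  shows "(norm u)\<^sup>2 = (\<Sum>i<m. (norm (PW blk i u))\<^sup>2) + (norm (PG u))\<^sup>2"
  using inner_split2[OF assms, of u u] by (simp add: power2_norm_eq_inner)

lemma norm_PW: "norm (PW blk i z) = norm (blockproj blk i (fst z))"
  by (simp add: PW_def)
lemma norm_PG: "norm (PG z) = norm (snd z)"
  by (simp add: PG_def)

lemma open_dom: "open (dom_nz blk m :: ((real^'k::finite) \<times> (real^'p::finite)) set)"
proof -
  have eq: "dom_nz blk m = (\<Inter>i\<in>{..<m}. {z :: (real^'k) \<times> (real^'p). blockproj blk i (fst z) \<noteq> 0})"
    unfolding dom_nz_def by blast
  have opn: "open {z :: (real^'k) \<times> (real^'p). blockproj blk i (fst z) \<noteq> 0}" for i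
  proof (rule open_Collect_neq)
    have "bounded_linear (\<lambda>z :: (real^'k) \<times> (real^'p). blockproj blk i (fst z))"
      using linear_conv_bounded_linear[THEN iffD1, OF linear_compose[OF linear_fst linear_bp]]
      by (simp add: o_def)
    then show "continuous_on UNIV (\<lambda>z :: (real^'k) \<times> (real^'p). blockproj blk i (fst z))"
      by (rule linear_continuous_on)
  qed (rule continuous_on_const)
  show ?thesis unfolding eq by (rule open_INT) (simp_all add: opn)
qed

locale setting =
  fixes blk :: "'k::finite \<Rightarrow> nat" and m :: nat
    and L :: "(real^'k) \<times> (real^'p::finite) \<Rightarrow> real"
    and G :: "(real^'k) \<times> (real^'p) \<Rightarrow> (real^'k) \<times> (real^'p)"
    and H :: "(real^'k) \<times> (real^'p) \<Rightarrow> ((real^'k) \<times> (real^'p)) \<Rightarrow>\<^sub>L ((real^'k) \<times> (real^'p))"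
    and Lvv :: "nat \<Rightarrow> nat \<Rightarrow> real" and Lvg :: "nat \<Rightarrow> real" and Lgg :: real
  assumes blk_range: "\<forall>j. blk j < m"
    and grad: "\<forall>z\<in>dom_nz blk m. (L has_derivative (\<lambda>h. G z \<bullet> h)) (at z)"
    and hess: "\<forall>z\<in>dom_nz blk m. (G has_derivative blinfun_apply (H z)) (at z)"
    and hess_cont: "continuous_on (dom_nz blk m) H"
    and psi: "PSI blk m L"
    and AV_vv: "\<forall>V gg i j. unit_blocks blk m V \<longrightarrow> i < m \<longrightarrow> j < m \<longrightarrow>
        onorm (PW blk j \<circ> blinfun_apply (H (V, gg)) \<circ> PW blk i) \<le> Lvv i j"
    and AV_vg: "\<forall>V gg i. unit_blocks blk m V \<longrightarrow> i < m \<longrightarrow>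
        onorm (PG \<circ> blinfun_apply (H (V, gg)) \<circ> PW blk i) \<le> Lvg i"
    and AV_gg: "\<forall>V gg. unit_blocks blk m V \<longrightarrow>
        onorm (PG \<circ> blinfun_apply (H (V, gg)) \<circ> PG) \<le> Lgg"
    and unit_ex: "\<exists>V. unit_blocks blk m V"
begin

abbreviation "D \<equiv> dom_nz blk m"

lemma sc_dom: "z \<in> D \<Longrightarrow> \<forall>i<m. a i \<noteq> 0 \<Longrightarrow> sc blk a z \<in> D"
  by (auto simp: dom_nz_def sc_def bp_scale)

lemma L_sc: "z \<in> D \<Longrightarrow> \<forall>i<m. a i > 0 \<Longrightarrow> L (sc blk a z) = L z"
  using psi unfolding PSI_def sc_def by (cases z) auto

lemma euler: assumes z: "z \<in> D" and i: "i < m" shows "G z \<bullet> PW blk i z = 0"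
proof -
  define f where "f a = L (z + a *\<^sub>R PW blk i z)" for a
  have eq: "z + a *\<^sub>R PW blk i z = sc blk (\<lambda>l. if l = i then 1 + a else 1) z" for a
    by (cases z) (auto simp: sc_def PW_def vec_eq_iff algebra_simps)
  have const: "\<forall>y. \<bar>0 - y\<bar> < 1 \<longrightarrow> f 0 = f y"
  proof (intro allI impI)
    fix y :: real assume "\<bar>0 - y\<bar> < 1"
    then have "\<forall>l<m. (if l = i then 1 + y else 1) > (0::real)" by auto
    then show "f 0 = f y" unfolding f_def eq[of y] using L_sc[OF z] by simp
  qed
  have "(f has_real_derivative (G (z + 0 *\<^sub>R PW blk i z) \<bullet> PW blk i z)) (at 0)"
    unfolding f_def by (rule deriv_line) (use grad z in simp)
  then have "(f has_real_derivative (G z \<bullet> PW blk i z)) (at 0)" by simp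
  from DERIV_local_const[OF this zero_less_one const] show ?thesis .
qed

lemma grad_sc:
  assumes z: "z \<in> D" and a: "\<forall>i<m. a i > 0"
  shows "G (sc blk a z) = sc blk (\<lambda>i. 1 / a i) (G z)"
proof -
  have a0: "\<forall>i<m. a i \<noteq> 0" using a by auto
  have d1: "((\<lambda>z. L (sc blk a z)) has_derivative (\<lambda>h. G (sc blk a z) \<bullet> sc blk a h)) (at z)"
    by (rule has_derivative_compose[OF bounded_linear_imp_has_derivative[OF bl_sc]])
       (use grad sc_dom[OF z a0] in blast)
  have d2: "(L has_derivative (\<lambda>h. G (sc blk a z) \<bullet> sc blk a h)) (at z)"
    by (rule has_derivative_transform_within_open[OF d1 open_dom z]) (simp add: L_sc a)
  have "(\<lambda>h. G z \<bullet> h) = (\<lambda>h. G (sc blk a z) \<bullet> sc blk a h)"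
    by (rule has_derivative_unique[OF _ d2]) (use grad z in blast)
  then have e: "G z \<bullet> h = G (sc blk a z) \<bullet> sc blk a h" for h
    using fun_cong[of "\<lambda>h. G z \<bullet> h" "\<lambda>h. G (sc blk a z) \<bullet> sc blk a h" h] by simp
  have "\<forall>h. h \<bullet> G z = h \<bullet> sc blk a (G (sc blk a z))"
  proof
    fix h
    have "h \<bullet> G z = G (sc blk a z) \<bullet> sc blk a h" using e[of h] by (simp add: inner_commute)
    also have "\<dots> = sc blk a (G (sc blk a z)) \<bullet> h" by (rule sc_inner[symmetric])
    finally show "h \<bullet> G z = h \<bullet> sc blk a (G (sc blk a z))" by (simp add: inner_commute)
  qed
  then have "G z = sc blk a (G (sc blk a z))" using vector_eq_ldot by blast
  then show ?thesis using sc_inv(1)[OF blk_range a0] by metis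
qed

lemma hess_sc:
  assumes z: "z \<in> D" and a: "\<forall>i<m. a i > 0"
  shows "H (sc blk a z) (sc blk a h) = sc blk (\<lambda>i. 1 / a i) (H z h)"
proof -
  have a0: "\<forall>i<m. a i \<noteq> 0" using a by auto
  have d1: "((\<lambda>z. G (sc blk a z)) has_derivative (\<lambda>h. H (sc blk a z) (sc blk a h))) (at z)"
    by (rule has_derivative_compose[OF bounded_linear_imp_has_derivative[OF bl_sc]])
       (use hess sc_dom[OF z a0] in blast)
  have d2: "((\<lambda>z. sc blk (\<lambda>i. 1 / a i) (G z)) has_derivative (\<lambda>h. sc blk (\<lambda>i. 1 / a i) (H z h))) (at z)"
    by (rule bounded_linear.has_derivative[OF bl_sc]) (use hess z in blast)
  have d3: "((\<lambda>z. G (sc blk a z)) has_derivative (\<lambda>h. sc blk (\<lambda>i. 1 / a i) (H z h))) (at z)"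
    by (rule has_derivative_transform_within_open[OF d2 open_dom z]) (simp add: grad_sc a)
  have "(\<lambda>h. H (sc blk a z) (sc blk a h)) = (\<lambda>h. sc blk (\<lambda>i. 1 / a i) (H z h))"
    by (rule has_derivative_unique[OF d1 d3])
  then show ?thesis
    using fun_cong[of "\<lambda>h. H (sc blk a z) (sc blk a h)" "\<lambda>h. sc blk (\<lambda>i. 1 / a i) (H z h)" h] by simp
qed

lemma symm: assumes "w \<in> D" shows "H w v \<bullet> u = H w u \<bullet> v"
  by (rule schwarz[OF open_dom grad hess hess_cont assms])

end

lemma arith_comb:
  fixes c A B x y :: real
  assumes "c \<le> A * x * y" "c \<le> B * x * y" "0 \<le> A" "0 \<le> B" "0 \<le> x" "0 \<le> y"
  shows "c \<le> A * x\<^sup>2 / 2 + B * y\<^sup>2 / 2"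
proof -
  have xy: "2 * (x * y) \<le> x\<^sup>2 + y\<^sup>2" using sum_squares_bound[of x y] by (simp add: algebra_simps)
  show ?thesis
  proof (cases "A \<le> B")
    case True
    have "A * (2 * (x * y)) \<le> A * (x\<^sup>2 + y\<^sup>2)" using xy assms(3) by (rule mult_left_mono)
    moreover have "A * y\<^sup>2 \<le> B * y\<^sup>2" using True by (simp add: mult_right_mono)
    ultimately show ?thesis using assms(1) by (simp add: algebra_simps)
  next
    case False
    have "B * (2 * (x * y)) \<le> B * (x\<^sup>2 + y\<^sup>2)" using xy assms(4) by (rule mult_left_mono)
    moreover have "B * x\<^sup>2 \<le> A * x\<^sup>2" using False by (simp add: mult_right_mono)
    ultimately show ?thesis using assms(2) by (simp add: algebra_simps)
  qed
qed

lemma bl_comp3: "bounded_linear f \<Longrightarrow> bounded_linear g \<Longrightarrow> bounded_linear (f \<circ> blinfun_apply A \<circ> g)"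
  unfolding o_def
  by (rule bounded_linear_compose[OF _ bounded_linear_compose[OF blinfun.bounded_linear_right]])

lemma normalize_eq:
  "normalize_blocks blk x = scale_blocks blk (\<lambda>i. 1 / norm (blockproj blk i x)) x"
  by (simp add: normalize_blocks_def vec_eq_iff)

lemma normalize_unit:
  assumes "\<forall>i<m. blockproj blk i x \<noteq> 0"
  shows "unit_blocks blk m (normalize_blocks blk x)"
  using assms by (simp add: unit_blocks_def normalize_eq bp_scale)

lemma normalize_back:
  assumes "\<forall>j. blk j < m" "\<forall>i<m. blockproj blk i x \<noteq> 0"
  shows "scale_blocks blk (\<lambda>i. norm (blockproj blk i x)) (normalize_blocks blk x) = x"
  using assms by (simp add: normalize_eq vec_eq_iff)

context setting begin

definition Qb where
  "Qb d = (\<Sum>i<m. Ltil_v m Lvv Lvg i * (norm (PW blk i d))\<^sup>2) + Ltil_g m Lvg Lgg * (norm (PG d))\<^sup>2"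

lemma m_pos: "m > 0"
  using blk_range by (metis gr_zeroI not_less0)

lemma unit_dom: "unit_blocks blk m v \<Longrightarrow> (v, gg) \<in> D"
  by (auto simp: unit_blocks_def dom_nz_def)

lemma nonneg:
  shows "i < m \<Longrightarrow> j < m \<Longrightarrow> 0 \<le> Lvv i j" and "i < m \<Longrightarrow> 0 \<le> Lvg i" and "0 \<le> Lgg"
proof -
  obtain V where V: "unit_blocks blk m V" using unit_ex by blast
  show "i < m \<Longrightarrow> j < m \<Longrightarrow> 0 \<le> Lvv i j"
    using AV_vv V onorm_pos_le[OF bl_comp3[OF bl_PW bl_PW]] by (meson order_trans)
  show "i < m \<Longrightarrow> 0 \<le> Lvg i"
    using AV_vg V onorm_pos_le[OF bl_comp3[OF bl_PG bl_PW]] by (meson order_trans)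
  show "0 \<le> Lgg"
    using AV_gg V onorm_pos_le[OF bl_comp3[OF bl_PG bl_PG]] by (meson order_trans)
qed

lemma Ltil_v_nonneg: "i < m \<Longrightarrow> 0 \<le> Ltil_v m Lvv Lvg i"
  unfolding Ltil_v_def using nonneg by (auto intro!: add_nonneg_nonneg sum_nonneg)

lemma Ltil_g_nonneg: "0 \<le> Ltil_g m Lvg Lgg"
  unfolding Ltil_g_def using nonneg by (auto intro!: add_nonneg_nonneg sum_nonneg)

lemma expand_inner:
  fixes x Y :: "(real^'k) \<times> (real^'p)"
  assumes "x = (\<Sum>i<m. P i) + Q"
  shows "x \<bullet> Y = (\<Sum>i<m. P i \<bullet> Y) + Q \<bullet> Y"
  using assms by (simp add: inner_sum_left inner_add_left)

lemma quad_unit: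
  assumes v: "unit_blocks blk m v"
  shows "d \<bullet> H (v, gg) d \<le> Qb d"
proof -
  have wD: "(v, gg) \<in> D" by (rule unit_dom[OF v])
  define H0 where "H0 = blinfun_apply (H (v, gg))"
  have sym: "H0 x \<bullet> y = H0 y \<bullet> x" for x y unfolding H0_def by (rule symm[OF wD])
  define a where "a i = norm (PW blk i d)" for i
  define ag where "ag = norm (PG d)"
  have bvv: "norm (PW blk j (H0 (PW blk i h))) \<le> Lvv i j * norm h" if "i < m" "j < m" for i j h
  proof -
    have "norm ((PW blk j \<circ> H0 \<circ> PW blk i) h) \<le> onorm (PW blk j \<circ> H0 \<circ> PW blk i) * norm h"
      unfolding H0_def by (rule onorm[OF bl_comp3[OF bl_PW bl_PW]])
    also have "\<dots> \<le> Lvv i j * norm h"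
      using AV_vv v that unfolding H0_def by (intro mult_right_mono) auto
    finally show ?thesis by simp
  qed
  have bvg: "norm (PG (H0 (PW blk i h))) \<le> Lvg i * norm h" if "i < m" for i h
  proof -
    have "norm ((PG \<circ> H0 \<circ> PW blk i) h) \<le> onorm (PG \<circ> H0 \<circ> PW blk i) * norm h"
      unfolding H0_def by (rule onorm[OF bl_comp3[OF bl_PG bl_PW]])
    also have "\<dots> \<le> Lvg i * norm h"
      using AV_vg v that unfolding H0_def by (intro mult_right_mono) auto
    finally show ?thesis by simp
  qed
  have bgg: "norm (PG (H0 (PG h))) \<le> Lgg * norm h" for h
  proof -
    have "norm ((PG \<circ> H0 \<circ> PG) h) \<le> onorm (PG \<circ> H0 \<circ> PG) * norm h"
      unfolding H0_def by (rule onorm[OF bl_comp3[OF bl_PG bl_PG]])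
    also have "\<dots> \<le> Lgg * norm h"
      using AV_gg v unfolding H0_def by (intro mult_right_mono) auto
    finally show ?thesis by simp
  qed
  have c1: "PW blk j d \<bullet> H0 (PW blk i d) \<le> Lvv i j * a i * a j" if "i < m" "j < m" for i j
  proof -
    have "PW blk j d \<bullet> H0 (PW blk i d) = PW blk j d \<bullet> PW blk j (H0 (PW blk i (PW blk i d)))"
      by (simp only: PW_idem) (rule PW_inner_left)
    also have "\<dots> \<le> norm (PW blk j d) * norm (PW blk j (H0 (PW blk i (PW blk i d))))"
      by (rule norm_cauchy_schwarz)
    also have "\<dots> \<le> a j * (Lvv i j * a i)"
      unfolding a_def by (intro mult_left_mono bvv that) auto
    finally show ?thesis by (simp add: algebra_simps)
  qed
  have c: "PW blk j d \<bullet> H0 (PW blk i d) \<le> Lvv i j * (a i)\<^sup>2 / 2 + Lvv j i * (a j)\<^sup>2 / 2"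
    if "i < m" "j < m" for i j
  proof (rule arith_comb)
    show "PW blk j d \<bullet> H0 (PW blk i d) \<le> Lvv i j * a i * a j" by (rule c1[OF that])
    have "PW blk j d \<bullet> H0 (PW blk i d) = PW blk i d \<bullet> H0 (PW blk j d)"
      by (metis inner_commute sym)
    also have "\<dots> \<le> Lvv j i * a j * a i" by (rule c1[OF that(2,1)])
    finally show "PW blk j d \<bullet> H0 (PW blk i d) \<le> Lvv j i * a i * a j" by (simp add: algebra_simps)
  qed (use nonneg that in \<open>auto simp: a_def\<close>)
  have cg: "PG d \<bullet> H0 (PW blk i d) \<le> Lvg i * a i * ag" if "i < m" for i
  proof -
    have "PG d \<bullet> H0 (PW blk i d) = PG d \<bullet> PG (H0 (PW blk i (PW blk i d)))"
      by (simp only: PW_idem) (rule PG_inner_left)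
    also have "\<dots> \<le> norm (PG d) * norm (PG (H0 (PW blk i (PW blk i d))))"
      by (rule norm_cauchy_schwarz)
    also have "\<dots> \<le> ag * (Lvg i * a i)"
      unfolding a_def ag_def by (intro mult_left_mono bvg that) auto
    finally show ?thesis by (simp add: algebra_simps)
  qed
  have cg2: "PW blk j d \<bullet> H0 (PG d) \<le> Lvg j * a j * ag" if "j < m" for j
  proof -
    have "PW blk j d \<bullet> H0 (PG d) = PG d \<bullet> H0 (PW blk j d)"
      by (metis inner_commute sym)
    also have "\<dots> \<le> Lvg j * a j * ag" by (rule cg[OF that])
    finally show ?thesis .
  qed
  have cgg: "PG d \<bullet> H0 (PG d) \<le> Lgg * ag\<^sup>2"
  proof -
    have "PG d \<bullet> H0 (PG d) = PG d \<bullet> PG (H0 (PG (PG d)))"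
      by (simp only: PG_idem) (rule PG_inner_left)
    also have "\<dots> \<le> norm (PG d) * norm (PG (H0 (PG (PG d))))"
      by (rule norm_cauchy_schwarz)
    also have "\<dots> \<le> ag * (Lgg * ag)"
      unfolding ag_def by (intro mult_left_mono bgg) auto
    finally show ?thesis by (simp add: algebra_simps power2_eq_square)
  qed
  have dd: "d = (\<Sum>i<m. PW blk i d) + PG d" using sum_PW[OF blk_range, of d] by simp
  have Hd: "H0 d = (\<Sum>i<m. H0 (PW blk i d)) + H0 (PG d)"
  proof -
    have "H0 d = H0 ((\<Sum>i<m. PW blk i d) + PG d)" using arg_cong[of _ _ H0, OF dd] .
    also have "\<dots> = (\<Sum>i<m. H0 (PW blk i d)) + H0 (PG d)"
      unfolding H0_def by (simp add: blinfun.add_right blinfun.sum_right)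
    finally show ?thesis .
  qed
  have exp: "d \<bullet> H0 d = (\<Sum>j<m. (\<Sum>i<m. PW blk j d \<bullet> H0 (PW blk i d)) + PW blk j d \<bullet> H0 (PG d))
      + ((\<Sum>i<m. PG d \<bullet> H0 (PW blk i d)) + PG d \<bullet> H0 (PG d))"
  proof -
    have "d \<bullet> H0 d = (\<Sum>j<m. PW blk j d \<bullet> H0 d) + PG d \<bullet> H0 d"
      by (rule expand_inner[OF dd])
    also have "\<dots> = (\<Sum>j<m. (\<Sum>i<m. PW blk j d \<bullet> H0 (PW blk i d)) + PW blk j d \<bullet> H0 (PG d))
      + ((\<Sum>i<m. PG d \<bullet> H0 (PW blk i d)) + PG d \<bullet> H0 (PG d))"
      unfolding Hd by (simp add: inner_add_right inner_sum_right)
    finally show ?thesis .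
  qed
  have T1: "(\<Sum>j<m. (\<Sum>i<m. PW blk j d \<bullet> H0 (PW blk i d)) + PW blk j d \<bullet> H0 (PG d))
      \<le> (\<Sum>j<m. (\<Sum>i<m. Lvv i j * (a i)\<^sup>2 / 2 + Lvv j i * (a j)\<^sup>2 / 2) + Lvg j * a j * ag)"
    by (intro sum_mono add_mono c cg2) auto
  have T2: "(\<Sum>i<m. PG d \<bullet> H0 (PW blk i d)) \<le> (\<Sum>i<m. Lvg i * a i * ag)"
    by (intro sum_mono cg) auto
  have S1: "(\<Sum>j<m. \<Sum>i<m. Lvv i j * (a i)\<^sup>2 / 2 + Lvv j i * (a j)\<^sup>2 / 2)
      = (\<Sum>i<m. (\<Sum>j<m. Lvv i j) * (a i)\<^sup>2)"
  proof -
    have "(\<Sum>j<m. \<Sum>i<m. Lvv i j * (a i)\<^sup>2 / 2) = (\<Sum>i<m. \<Sum>j<m. Lvv i j * (a i)\<^sup>2 / 2)"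
      by (rule sum.swap)
    also have "\<dots> = (\<Sum>i<m. (\<Sum>j<m. Lvv i j) * (a i)\<^sup>2 / 2)"
      by (simp add: sum_distrib_right sum_divide_distrib)
    finally have A: "(\<Sum>j<m. \<Sum>i<m. Lvv i j * (a i)\<^sup>2 / 2) = (\<Sum>i<m. (\<Sum>j<m. Lvv i j) * (a i)\<^sup>2 / 2)" .
    have B: "(\<Sum>j<m. \<Sum>i<m. Lvv j i * (a j)\<^sup>2 / 2) = (\<Sum>j<m. (\<Sum>i<m. Lvv j i) * (a j)\<^sup>2 / 2)"
      by (simp add: sum_distrib_right sum_divide_distrib)
    have "(\<Sum>j<m. \<Sum>i<m. Lvv i j * (a i)\<^sup>2 / 2 + Lvv j i * (a j)\<^sup>2 / 2)
        = (\<Sum>j<m. \<Sum>i<m. Lvv i j * (a i)\<^sup>2 / 2) + (\<Sum>j<m. \<Sum>i<m. Lvv j i * (a j)\<^sup>2 / 2)"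
      by (simp add: sum.distrib)
    also have "\<dots> = (\<Sum>i<m. (\<Sum>j<m. Lvv i j) * (a i)\<^sup>2 / 2) + (\<Sum>i<m. (\<Sum>j<m. Lvv i j) * (a i)\<^sup>2 / 2)"
      unfolding A B ..
    also have "\<dots> = (\<Sum>i<m. (\<Sum>j<m. Lvv i j) * (a i)\<^sup>2)"
      by (simp add: sum.distrib[symmetric])
    finally show ?thesis .
  qed
  have S2: "(\<Sum>j<m. Lvg j * a j * ag) + (\<Sum>i<m. Lvg i * a i * ag)
      \<le> (\<Sum>i<m. Lvg i * (a i)\<^sup>2) + (\<Sum>i<m. Lvg i) * ag\<^sup>2"
  proof -
    have "(\<Sum>j<m. Lvg j * a j * ag) + (\<Sum>i<m. Lvg i * a i * ag) = (\<Sum>i<m. Lvg i * (2 * (a i * ag)))"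
      by (simp add: sum.distrib[symmetric] algebra_simps)
    also have "\<dots> \<le> (\<Sum>i<m. Lvg i * ((a i)\<^sup>2 + ag\<^sup>2))"
    proof (rule sum_mono)
      fix i assume "i \<in> {..<m}"
      then have "0 \<le> Lvg i" using nonneg by auto
      moreover have "2 * (a i * ag) \<le> (a i)\<^sup>2 + ag\<^sup>2"
        using sum_squares_bound[of "a i" ag] by (simp add: algebra_simps)
      ultimately show "Lvg i * (2 * (a i * ag)) \<le> Lvg i * ((a i)\<^sup>2 + ag\<^sup>2)" by (rule mult_left_mono[rotated])
    qed
    also have "\<dots> = (\<Sum>i<m. Lvg i * (a i)\<^sup>2) + (\<Sum>i<m. Lvg i) * ag\<^sup>2"
      by (simp add: algebra_simps sum.distrib sum_distrib_right)
    finally show ?thesis .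
  qed
  have S3: "Lgg * ag\<^sup>2 \<le> real m * Lgg * ag\<^sup>2"
  proof -
    have "1 \<le> real m" using m_pos by simp
    then have "1 * (Lgg * ag\<^sup>2) \<le> real m * (Lgg * ag\<^sup>2)"
      using nonneg(3) by (intro mult_right_mono) auto
    then show ?thesis by (simp add: algebra_simps)
  qed
  have Q: "Qb d = (\<Sum>i<m. Lvg i * (a i)\<^sup>2) + (\<Sum>i<m. (\<Sum>j<m. Lvv i j) * (a i)\<^sup>2)
      + real m * Lgg * ag\<^sup>2 + (\<Sum>i<m. Lvg i) * ag\<^sup>2"
    unfolding Qb_def Ltil_v_def Ltil_g_def a_def ag_def
    by (simp add: algebra_simps sum.distrib)
  have "d \<bullet> H (v, gg) d = d \<bullet> H0 d" unfolding H0_def ..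
  also have "\<dots> \<le> Qb d"
    unfolding exp Q using T1 T2 S1 S2 S3 cgg
    by (simp add: sum.distrib)
  finally show ?thesis .
qed

end

context setting begin

lemma quad_gen:
  assumes w: "w \<in> D" and r1: "\<forall>i<m. 1 \<le> norm (blockproj blk i (fst w))"
  shows "d \<bullet> H w d \<le> Qb d"
proof -
  define r where "r i = norm (blockproj blk i (fst w))" for i
  have rpos: "\<forall>i<m. r i > 0" using r1 unfolding r_def by (meson less_le_trans zero_less_one)
  have r0: "\<forall>i<m. r i \<noteq> 0" using rpos by auto
  have nz: "\<forall>i<m. blockproj blk i (fst w) \<noteq> 0" using w by (simp add: dom_nz_def)
  define v where "v = normalize_blocks blk (fst w)"
  have vu: "unit_blocks blk m v" unfolding v_def by (rule normalize_unit[OF nz])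
  have wv: "w = sc blk r (v, snd w)"
    using normalize_back[OF blk_range nz] unfolding sc_def v_def r_def by simp
  define e where "e = sc blk (\<lambda>i. 1 / r i) d"
  have de: "d = sc blk r e" unfolding e_def by (rule sc_inv(2)[OF blk_range r0, symmetric])
  have Hd: "H w d = sc blk (\<lambda>i. 1 / r i) (H (v, snd w) e)"
  proof -
    have hs: "H (sc blk r (v, snd w)) (sc blk r e) = sc blk (\<lambda>i. 1 / r i) (H (v, snd w) e)"
      by (rule hess_sc[OF unit_dom[OF vu] rpos])
    show ?thesis using hs wv[symmetric] de[symmetric] by simp
  qed
  have "d \<bullet> H w d = e \<bullet> H (v, snd w) e"
    unfolding Hd e_def by (simp add: sc_inner)
  also have "\<dots> \<le> Qb e" by (rule quad_unit[OF vu])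
  also have "\<dots> \<le> Qb d"
    unfolding Qb_def
  proof (intro add_mono sum_mono)
    fix i assume i: "i \<in> {..<m}"
    have ri: "1 \<le> r i" using r1 i unfolding r_def by auto
    have "(norm (PW blk i e))\<^sup>2 = (1 / r i)\<^sup>2 * (norm (PW blk i d))\<^sup>2"
      unfolding e_def PW_sc using ri by (simp add: power_divide)
    also have "\<dots> \<le> 1 * (norm (PW blk i d))\<^sup>2"
      using ri by (intro mult_right_mono) (auto simp: power_le_one)
    finally have "(norm (PW blk i e))\<^sup>2 \<le> (norm (PW blk i d))\<^sup>2" by simp
    then show "Ltil_v m Lvv Lvg i * (norm (PW blk i e))\<^sup>2 \<le> Ltil_v m Lvv Lvg i * (norm (PW blk i d))\<^sup>2"
      using Ltil_v_nonneg i by (intro mult_left_mono) auto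
  qed (simp add: e_def PG_sc)
  finally show ?thesis .
qed

lemma step:
  assumes xg: "(x, g) \<in> D"
  and pos_v: "\<forall>i<m. Ltil_v m Lvv Lvg i > 0"
  and pos_g: "Ltil_g m Lvg Lgg > 0"
  and x': "x' = (\<chi> j. x $ j - (1 / Ltil_v m Lvv Lvg (blk j)) * (norm (blockproj blk (blk j) x))\<^sup>2
          * fst (G (x, g)) $ j)"
  and g': "g' = g - (1 / Ltil_g m Lvg Lgg) *\<^sub>R snd (G (x, g))"
  shows "(x', g') \<in> D \<and> L (x', g') \<le> L (x, g)
     - (norm (G (normalize_blocks blk x, g)))\<^sup>2 / (2 * Ltil_max m Lvv Lvg Lgg)"
proof -
  define n where "n i = norm (blockproj blk i x)" for i
  have nz: "\<forall>i<m. blockproj blk i x \<noteq> 0" using xg by (simp add: dom_nz_def)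
  have npos: "\<forall>i<m. n i > 0" using nz unfolding n_def by auto
  have n0: "\<forall>i<m. n i \<noteq> 0" using npos by auto
  define v where "v = normalize_blocks blk x"
  have vu: "unit_blocks blk m v" unfolding v_def by (rule normalize_unit[OF nz])
  define z where "z = (v, g)"
  have zD: "z \<in> D" unfolding z_def by (rule unit_dom[OF vu])
  have xz: "(x, g) = sc blk n z"
    using normalize_back[OF blk_range nz] unfolding sc_def z_def v_def n_def by simp
  have Gx: "G (x, g) = sc blk (\<lambda>i. 1 / n i) (G z)"
    unfolding xz by (rule grad_sc[OF zD npos])
  define \<eta> where "\<eta> i = 1 / Ltil_v m Lvv Lvg i" for i
  define \<eta>g where "\<eta>g = 1 / Ltil_g m Lvg Lgg"
  define Gz where "Gz = G z"
  define d where "d = ((\<chi> j. - \<eta> (blk j) * fst Gz $ j), - \<eta>g *\<^sub>R snd Gz)"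
  have x'eq: "(x', g') = sc blk n (z + d)"
  proof -
    have "x' $ j = n (blk j) * (v $ j - \<eta> (blk j) * fst Gz $ j)" for j
    proof -
      have nj: "n (blk j) \<noteq> 0" using n0 blk_range by auto
      have xj: "x $ j = n (blk j) * v $ j"
        using nj unfolding v_def normalize_blocks_def n_def by simp
      have "x' $ j = x $ j - \<eta> (blk j) * (n (blk j))\<^sup>2 * (1 / n (blk j) * fst Gz $ j)"
        unfolding x' Gx Gz_def \<eta>_def n_def by (simp add: sc_def)
      also have "\<dots> = n (blk j) * (v $ j - \<eta> (blk j) * fst Gz $ j)"
        unfolding xj using nj by (simp add: power2_eq_square field_simps)
      finally show ?thesis .
    qed
    moreover have "g' = g - \<eta>g *\<^sub>R snd Gz"
      unfolding g' Gx Gz_def \<eta>g_def by (simp add: sc_def)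
    ultimately show ?thesis
      unfolding sc_def z_def d_def by (simp add: vec_eq_iff algebra_simps)
  qed
  have PWd: "PW blk i d = (- \<eta> i) *\<^sub>R PW blk i Gz" for i
    unfolding d_def PW_def by (simp add: vec_eq_iff)
  have PGd: "PG d = (- \<eta>g) *\<^sub>R PG Gz"
    unfolding d_def PG_def by simp
  have orth: "blockproj blk i v \<bullet> blockproj blk i (fst d) = 0" if i: "i < m" for i
  proof -
    have e: "Gz \<bullet> PW blk i z = 0" unfolding Gz_def by (rule euler[OF zD i])
    have "blockproj blk i (fst d) = (- \<eta> i) *\<^sub>R blockproj blk i (fst Gz)"
      using PWd[of i] unfolding PW_def by simp
    then have "blockproj blk i v \<bullet> blockproj blk i (fst d) = (- \<eta> i) * (blockproj blk i v \<bullet> blockproj blk i (fst Gz))"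
      by simp
    also have "blockproj blk i v \<bullet> blockproj blk i (fst Gz) = fst Gz \<bullet> blockproj blk i v"
      using bp_inner_right[of "fst Gz" blk i v] by (simp add: inner_commute)
    also have "\<dots> = 0" using e unfolding PW_def z_def by (simp add: inner_prod_def)
    finally show ?thesis by simp
  qed
  have seg: "z + s *\<^sub>R d \<in> D \<and> (\<forall>i<m. 1 \<le> norm (blockproj blk i (fst (z + s *\<^sub>R d))))" for s
  proof -
    have ge: "1 \<le> norm (blockproj blk i (fst (z + s *\<^sub>R d)))" if i: "i < m" for i
    proof -
      have eq: "blockproj blk i (fst (z + s *\<^sub>R d)) = blockproj blk i v + s *\<^sub>R blockproj blk i (fst d)"
        unfolding z_def by (simp add: bp_add bp_scaleR)
      have "orthogonal (blockproj blk i v) (s *\<^sub>R blockproj blk i (fst d))"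
        using orth[OF i] by (simp add: orthogonal_def)
      from norm_add_Pythagorean[OF this]
      have "(norm (blockproj blk i (fst (z + s *\<^sub>R d))))\<^sup>2 \<ge> (norm (blockproj blk i v))\<^sup>2"
        unfolding eq by simp
      moreover have "norm (blockproj blk i v) = 1" using vu i by (simp add: unit_blocks_def)
      ultimately have "1\<^sup>2 \<le> (norm (blockproj blk i (fst (z + s *\<^sub>R d))))\<^sup>2" by simp
      then show ?thesis by (rule power2_le_imp_le) simp
    qed
    then show ?thesis by (fastforce simp: dom_nz_def)
  qed
  have segD: "\<forall>s. 0 \<le> s \<and> s \<le> 1 \<longrightarrow> z + s *\<^sub>R d \<in> D" using seg by blast
  have segM: "\<forall>s. 0 \<le> s \<and> s \<le> 1 \<longrightarrow> d \<bullet> H (z + s *\<^sub>R d) d \<le> Qb d"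
    using seg quad_gen by blast
  have desc: "L (z + d) \<le> L z + G z \<bullet> d + Qb d / 2"
    by (rule descent[OF grad hess segD segM])
  have zdD: "z + d \<in> D" using seg[of 1] by simp
  have Lx': "L (x', g') = L (z + d)" unfolding x'eq by (rule L_sc[OF zdD npos])
  have Lx: "L (x, g) = L z" unfolding xz by (rule L_sc[OF zD npos])
  define A where "A i = (norm (PW blk i Gz))\<^sup>2" for i
  define B where "B = (norm (PG Gz))\<^sup>2"
  have Ltv: "\<forall>i<m. Ltil_v m Lvv Lvg i * \<eta> i = 1" using pos_v unfolding \<eta>_def by auto
  have Ltg: "Ltil_g m Lvg Lgg * \<eta>g = 1" using pos_g unfolding \<eta>g_def by auto
  have Gd: "G z \<bullet> d = - ((\<Sum>i<m. \<eta> i * A i) + \<eta>g * B)"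
    unfolding inner_split2[OF blk_range, of "G z" d] PWd PGd A_def B_def Gz_def
    by (simp add: power2_norm_eq_inner sum_negf)
  have Qd: "Qb d = (\<Sum>i<m. \<eta> i * A i) + \<eta>g * B"
  proof -
    have "Qb d = (\<Sum>i<m. (Ltil_v m Lvv Lvg i * \<eta> i) * \<eta> i * A i) + (Ltil_g m Lvg Lgg * \<eta>g) * \<eta>g * B"
    proof -
      have nsq: "(norm (c *\<^sub>R y))\<^sup>2 = c * c * (norm y)\<^sup>2" for c :: real and y :: "(real^'k) \<times> (real^'p)"
        by (simp add: power_mult_distrib power2_eq_square)
      show ?thesis unfolding Qb_def PWd PGd A_def B_def nsq by (simp add: algebra_simps)
    qed
    also have "\<dots> = (\<Sum>i<m. \<eta> i * A i) + \<eta>g * B"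
      using Ltv Ltg by simp
    finally show ?thesis .
  qed
  define Lm where "Lm = Ltil_max m Lvv Lvg Lgg"
  have Lm_ge_v: "Ltil_v m Lvv Lvg i \<le> Lm" if "i < m" for i
    unfolding Lm_def Ltil_max_def using that by (intro Max_ge) auto
  have Lm_ge_g: "Ltil_g m Lvg Lgg \<le> Lm"
    unfolding Lm_def Ltil_max_def by (intro Max_ge) auto
  have Lmpos: "Lm > 0" using pos_g Lm_ge_g by linarith
  have eta_ge: "1 / Lm \<le> \<eta> i" if "i < m" for i
    unfolding \<eta>_def using pos_v that Lm_ge_v[OF that] by (intro divide_left_mono) auto
  have etag_ge: "1 / Lm \<le> \<eta>g"
    unfolding \<eta>g_def using pos_g Lm_ge_g by (intro divide_left_mono) auto
  have "(norm Gz)\<^sup>2 / Lm = (\<Sum>i<m. 1 / Lm * A i) + 1 / Lm * B"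
    unfolding norm2_split[OF blk_range, of Gz] A_def B_def
    by (simp add: sum_divide_distrib add_divide_distrib)
  also have "\<dots> \<le> (\<Sum>i<m. \<eta> i * A i) + \<eta>g * B"
    using eta_ge etag_ge unfolding A_def B_def
    by (intro add_mono sum_mono mult_right_mono) auto
  finally have key: "(norm Gz)\<^sup>2 / Lm \<le> (\<Sum>i<m. \<eta> i * A i) + \<eta>g * B" .
  have "L (x', g') \<le> L (x, g) - ((\<Sum>i<m. \<eta> i * A i) + \<eta>g * B) / 2"
    using desc unfolding Lx' Lx Gd Qd by (simp add: field_simps)
  also have "\<dots> \<le> L (x, g) - (norm Gz)\<^sup>2 / (2 * Lm)"
    using key by (simp add: field_simps)
  finally show ?thesis
    using zdD x'eq sc_dom[OF zdD n0] unfolding Gz_def z_def v_def Lm_def by simp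
qed

end

theorem theorem2:
  fixes blk :: "'k::finite \<Rightarrow> nat" and m :: nat
    and L :: "(real^'k) \<times> (real^'p::finite) \<Rightarrow> real"
    and G :: "(real^'k) \<times> (real^'p) \<Rightarrow> (real^'k) \<times> (real^'p)"
    and H :: "(real^'k) \<times> (real^'p) \<Rightarrow> ((real^'k) \<times> (real^'p)) \<Rightarrow>\<^sub>L ((real^'k) \<times> (real^'p))"
    and Lvv :: "nat \<Rightarrow> nat \<Rightarrow> real" and Lvg :: "nat \<Rightarrow> real" and Lgg :: real
    and W :: "nat \<Rightarrow> real^'k" and g :: "nat \<Rightarrow> real^'p" and T :: nat
  assumes blk_range: "\<forall>j. blk j < m"
    and blk_nonempty: "\<forall>i<m. \<exists>j. blk j = i"
    \<comment> \<open>L is C^2 on the domain (all blocks nonzero), with gradient G and Hessian H\<close>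
    and grad: "\<forall>z\<in>dom_nz blk m. (L has_derivative (\<lambda>h. G z \<bullet> h)) (at z)"
    and hess: "\<forall>z\<in>dom_nz blk m. (G has_derivative blinfun_apply (H z)) (at z)"
    and hess_cont: "continuous_on (dom_nz blk m) H"
    and psi: "PSI blk m L"
    and bdd: "bdd_below (L ` dom_nz blk m)"
    \<comment> \<open>assumption (A_V): spectral norms of Hessian blocks at normalized points\<close>
    and AV_vv: "\<forall>V gg i j. unit_blocks blk m V \<longrightarrow> i < m \<longrightarrow> j < m \<longrightarrow>
        onorm (PW blk j \<circ> blinfun_apply (H (V, gg)) \<circ> PW blk i) \<le> Lvv i j"
    and AV_vg: "\<forall>V gg i. unit_blocks blk m V \<longrightarrow> i < m \<longrightarrow>
        onorm (PG \<circ> blinfun_apply (H (V, gg)) \<circ> PW blk i) \<le> Lvg i"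
    and AV_gg: "\<forall>V gg. unit_blocks blk m V \<longrightarrow>
        onorm (PG \<circ> blinfun_apply (H (V, gg)) \<circ> PG) \<le> Lgg"
    and pos_v: "\<forall>i<m. Ltil_v m Lvv Lvg i > 0"
    and pos_g: "Ltil_g m Lvg Lgg > 0"
    \<comment> \<open>PSI-GD with eta_i = 1 / Ltil_v i and eta_g = 1 / Ltil_g\<close>
    and init: "(W 0, g 0) \<in> dom_nz blk m"
    and stepW: "\<forall>t. W (Suc t) = (\<chi> j. W t $ j
        - (1 / Ltil_v m Lvv Lvg (blk j)) * (norm (blockproj blk (blk j) (W t)))\<^sup>2
          * fst (G (W t, g t)) $ j)"
    and stepg: "\<forall>t. g (Suc t) = g t - (1 / Ltil_g m Lvg Lgg) *\<^sub>R snd (G (W t, g t))"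
    and T: "T \<ge> 1"
  shows "(MIN t\<in>{..<T}. (norm (G (normalize_blocks blk (W t), g t)))\<^sup>2)
      \<le> 2 * Ltil_max m Lvv Lvg Lgg * (L (W 0, g 0) - Inf (L ` dom_nz blk m)) / real T"
proof -
  have nz0: "\<forall>i<m. blockproj blk i (W 0) \<noteq> 0" using init by (simp add: dom_nz_def)
  have unit_ex: "\<exists>V. unit_blocks blk m V" using normalize_unit[OF nz0] by blast
  interpret setting blk m L G H Lvv Lvg Lgg
    by (rule setting.intro[OF blk_range grad hess hess_cont psi AV_vv AV_vg AV_gg unit_ex])
  define Lm where "Lm = Ltil_max m Lvv Lvg Lgg"
  define c where "c t = (norm (G (normalize_blocks blk (W t), g t)))\<^sup>2" for t
  have Lm_ge_g: "Ltil_g m Lvg Lgg \<le> Lm"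
    unfolding Lm_def Ltil_max_def by (intro Max_ge) auto
  have Lmpos: "Lm > 0" using pos_g Lm_ge_g by linarith
  have inv: "(W t, g t) \<in> dom_nz blk m \<and> L (W t, g t) \<le> L (W 0, g 0) - (\<Sum>s<t. c s) / (2 * Lm)" for t
  proof (induction t)
    case 0
    then show ?case using init by simp
  next
    case (Suc t)
    have st: "(W (Suc t), g (Suc t)) \<in> dom_nz blk m \<and> L (W (Suc t), g (Suc t)) \<le> L (W t, g t) - c t / (2 * Lm)"
      unfolding c_def Lm_def
      by (rule step[OF conjunct1[OF Suc.IH] pos_v pos_g stepW[rule_format] stepg[rule_format]])
    then show ?case using Suc.IH by (simp add: add_divide_distrib)
  qed
  have "Inf (L ` dom_nz blk m) \<le> L (W T, g T)"
    using inv[of T] bdd by (intro cInf_lower) auto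
  then have "(\<Sum>s<T. c s) / (2 * Lm) \<le> L (W 0, g 0) - Inf (L ` dom_nz blk m)"
    using inv[of T] by linarith
  then have sumle: "(\<Sum>s<T. c s) \<le> 2 * Lm * (L (W 0, g 0) - Inf (L ` dom_nz blk m))"
    using Lmpos by (simp add: pos_divide_le_eq mult.commute)
  define M where "M = (MIN t\<in>{..<T}. c t)"
  have "M \<le> c t" if "t < T" for t unfolding M_def using that by (intro Min_le) auto
  then have "(\<Sum>s<T. M) \<le> (\<Sum>s<T. c s)" by (intro sum_mono) auto
  then have "real T * M \<le> 2 * Lm * (L (W 0, g 0) - Inf (L ` dom_nz blk m))"
    using sumle by simp
  moreover have "real T > 0" using T by simp
  ultimately have "M \<le> 2 * Lm * (L (W 0, g 0) - Inf (L ` dom_nz blk m)) / real T"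
    by (simp add: pos_le_divide_eq mult.commute)
  then show ?thesis unfolding M_def c_def Lm_def .
qed

end
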